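(* Let $(P,\leqslant)$ be a conditionally-complete interpolating poset and let $P^* := \{x \in P : \exists\, y \in P,\ y \ll x\}$ with the induced order. Then $(P^* )^* = P^*$, where $(P^* )^* := \{x \in P^* : \exists\, y \in P^*,\ y \ll_{P^*} x\}$.
   Context: A poset is conditionally-complete if every nonempty subset bounded above has a supremum. A nonempty subset $D$ is directed if any two elements of $D$ have an upper bound in $D$. For a poset $R$ and $x,y \in R$, $x \ll_R y$ means: for every directed subset $D$ of $R$ bounded above in $R$ with supremum $d_0$ in $R$, $y \leqslant d_0$ implies $x \leqslant d$ for some $d \in D$; write $\ll$ for $\ll_P$. $P$ is interpolating if whenever $x \ll y$ there is $z \in P$ with $x \ll z \ll y$. *)

theory Defs
  imports Main
begin

text \<open>A poset is modelled as a carrier set S of a type of class order, with the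
induced order. All notions are relative to the carrier S.\<close>

definition upper_bound :: "'a::order set \<Rightarrow> 'a set \<Rightarrow> 'a \<Rightarrow> bool" where
  "upper_bound S A u \<longleftrightarrow> u \<in> S \<and> (\<forall>a\<in>A. a \<le> u)"

definition bounded_above :: "'a::order set \<Rightarrow> 'a set \<Rightarrow> bool" where
  "bounded_above S A \<longleftrightarrow> (\<exists>u. upper_bound S A u)"

definition is_sup :: "'a::order set \<Rightarrow> 'a set \<Rightarrow> 'a \<Rightarrow> bool" where
  "is_sup S A s \<longleftrightarrow> upper_bound S A s \<and> (\<forall>u. upper_bound S A u \<longrightarrow> s \<le> u)"

definition cond_complete :: "'a::order set \<Rightarrow> bool" where
  "cond_complete S \<longleftrightarrow>
     (\<forall>A. A \<subseteq> S \<and> A \<noteq> {} \<and> bounded_above S A \<longrightarrow> (\<exists>s. is_sup S A s))"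

definition directed :: "'a::order set \<Rightarrow> 'a set \<Rightarrow> bool" where
  "directed S D \<longleftrightarrow> D \<noteq> {} \<and> D \<subseteq> S \<and>
     (\<forall>x\<in>D. \<forall>y\<in>D. \<exists>z\<in>D. x \<le> z \<and> y \<le> z)"

definition way_below :: "'a::order set \<Rightarrow> 'a \<Rightarrow> 'a \<Rightarrow> bool" where
  "way_below S x y \<longleftrightarrow>
     (\<forall>D d0. directed S D \<and> bounded_above S D \<and> is_sup S D d0 \<and> y \<le> d0
        \<longrightarrow> (\<exists>d\<in>D. x \<le> d))"

definition interpolating :: "'a::order set \<Rightarrow> bool" where
  "interpolating S \<longleftrightarrow>
     (\<forall>x\<in>S. \<forall>y\<in>S. way_below S x y \<longrightarrow>
        (\<exists>z\<in>S. way_below S x z \<and> way_below S z y))"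

definition star :: "'a::order set \<Rightarrow> 'a set" where
  "star S = {x \<in> S. \<exists>y\<in>S. way_below S y x}"

end

theory Submission
  imports Defs
begin

lemma wb_mono:
  assumes "way_below S y d" "d \<le> s" shows "way_below S y s"
  using assms unfolding way_below_def by (meson order_trans)

theorem proposition2p6:
  fixes P :: "'a::order set"
  assumes "cond_complete P"
    and "interpolating P"
  shows "star (star P) = star P"
proof
  show "star (star P) \<subseteq> star P" unfolding star_def by auto
next
  show "star P \<subseteq> star (star P)"
  proof
    fix x assume xs: "x \<in> star P"
    then obtain y where xP: "x \<in> P" and yP: "y \<in> P" and yx: "way_below P y x"
      unfolding star_def by auto
    then obtain z where zP: "z \<in> P" and yz: "way_below P y z" and zx: "way_below P z x"
      using assms(2) unfolding interpolating_def by blast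
    have zs: "z \<in> star P" using zP yP yz unfolding star_def by auto
    have "way_below (star P) z x"
      unfolding way_below_def
    proof (intro allI impI)
      fix D d0 assume H: "directed (star P) D \<and> bounded_above (star P) D \<and> is_sup (star P) D d0 \<and> x \<le> d0"
      have sub: "star P \<subseteq> P" unfolding star_def by auto
      have dirP: "directed P D" using H sub unfolding directed_def by auto
      obtain u where u: "upper_bound (star P) D u" using H unfolding bounded_above_def by auto
      hence bP: "bounded_above P D" using sub unfolding bounded_above_def upper_bound_def by auto
      obtain s where s: "is_sup P D s"
        using assms(1) dirP bP unfolding cond_complete_def directed_def by blast
      obtain d where dD: "d \<in> D" using H unfolding directed_def by auto
      have "d \<in> star P" using dD H unfolding directed_def by auto
      then obtain y' where y'P: "y' \<in> P" and y'd: "way_below P y' d" unfolding star_def by auto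
      have "d \<le> s" using s dD unfolding is_sup_def upper_bound_def by auto
      hence "way_below P y' s" using wb_mono y'd by blast
      hence sS: "s \<in> star P" using s y'P unfolding star_def is_sup_def upper_bound_def by auto
      have "upper_bound (star P) D s" using s sS unfolding is_sup_def upper_bound_def by auto
      hence "d0 \<le> s" using H unfolding is_sup_def by auto
      hence "x \<le> s" using H by auto
      moreover have "bounded_above P D" by fact
      ultimately show "\<exists>d\<in>D. z \<le> d" using zx dirP s unfolding way_below_def by blast
    qed
    thus "x \<in> star (star P)" using xs zs unfolding star_def by auto
  qed
qed

end
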